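(* Let $\xi$ be a transcendental real number. For every positive integer $k$, $$(k+1) \bigl( 1 + \lambda_{k+1} (\xi) \bigr) \ge k \bigl( 1 + \lambda_k (\xi) \bigr).$$ Consequently, for every integer $n \ge k$, $$\lambda_n (\xi) \ge \frac{k \lambda_k (\xi) - n + k}{n}.$$
   Context: For an integer $n \ge 1$ and a real number $\xi$, $\lambda_n(\xi)$ denotes the supremum (possibly $+\infty$) of the real numbers $\lambda$ such that, for arbitrarily large real numbers $X$, the inequalities $0 < |x_0| \le X$, $\max_{1 \le m \le n} |x_0 \xi^m - x_m| \le X^{-\lambda}$ have a solution in integers $x_0, \ldots, x_n$. The inequalities are understood in the extended reals (if $\lambda_k(\xi)=+\infty$ then the right-hand sides are $+\infty$). *)

theory Defs
  imports "HOL-Analysis.Analysis" "HOL-Computational_Algebra.Polynomial"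
begin

definition transcendental_real :: "real \<Rightarrow> bool" where
  "transcendental_real \<xi> \<longleftrightarrow>
     \<not> (\<exists>p :: int poly. p \<noteq> 0 \<and> poly (map_poly real_of_int p) \<xi> = 0)"

definition unif_lambda :: "nat \<Rightarrow> real \<Rightarrow> ereal" where
  "unif_lambda n \<xi> = Sup (ereal ` {lam :: real.
     \<forall>X0 :: real. \<exists>X \<ge> X0. X > 0 \<and>
       (\<exists>(x0 :: int) (x :: nat \<Rightarrow> int).
          0 < \<bar>x0\<bar> \<and> real_of_int \<bar>x0\<bar> \<le> X \<and>
          (\<forall>m \<in> {1..n}. \<bar>real_of_int x0 * \<xi> ^ m - real_of_int (x m)\<bar> \<le> X powr (- lam)))})"

end

theory Submission
  imports Defs
begin

lemma siegel:
  fixes z :: "nat \<Rightarrow> int" and k B :: nat and M :: real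
  assumes zb: "\<forall>i\<le>k. \<bar>z i\<bar> \<le> M" and Bk: "real B ^ k \<ge> 2*(k+1)*M + 1" and k1: "k \<ge> 1"
  shows "\<exists>d::nat\<Rightarrow>int. (\<exists>i\<le>k. d i \<noteq> 0) \<and> (\<forall>i\<le>k. \<bar>d i\<bar> \<le> B) \<and> (\<Sum>i\<le>k. d i * z i) = 0"
proof -
  have M0: "M \<ge> 0" using zb by (meson abs_ge_zero le0 of_int_0_le_iff order_trans)
  have B1: "B \<ge> 1"
  proof (rule ccontr)
    assume "\<not> B \<ge> 1" then have "B = 0" by simp
    moreover have "2*(k+1)*M \<ge> 0" using M0 by simp
    ultimately show False using Bk k1 by (simp add: power_0_left)
  qed
  define A where "A = PiE {..k} (\<lambda>_. {0..B})"
  define f where "f c = (\<Sum>i\<le>k. int (c i) * z i)" for c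
  define N where "N = \<lfloor>(k+1)*B*M\<rfloor>"
  have cardA: "card A = (B+1)^(k+1)" unfolding A_def by (simp add: card_PiE)
  have fA: "f ` A \<subseteq> {-N..N}"
  proof
    fix v assume "v \<in> f ` A"
    then obtain c where c: "c \<in> A" and v: "v = f c" by auto
    have "\<bar>real_of_int (f c)\<bar> \<le> (\<Sum>i\<le>k. \<bar>real (c i) * real_of_int (z i)\<bar>)"
      unfolding f_def by (simp add: sum_abs)
    also have "\<dots> \<le> (\<Sum>i\<le>k. real B * M)"
    proof (rule sum_mono)
      fix i assume i: "i \<in> {..k}"
      have "c i \<le> B" using c i unfolding A_def by auto
      moreover have "\<bar>real_of_int (z i)\<bar> \<le> M" using zb i by auto
      ultimately show "\<bar>real (c i) * real_of_int (z i)\<bar> \<le> real B * M"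
        by (simp add: abs_mult mult_mono)
    qed
    also have "\<dots> = (k+1)*B*M" by (simp add: algebra_simps)
    finally have "\<bar>real_of_int (f c)\<bar> \<le> (k+1)*B*M" .
    then have "\<bar>f c\<bar> \<le> N" unfolding N_def by (simp add: le_floor_iff)
    then show "v \<in> {-N..N}" using v by auto
  qed
  have "\<not> inj_on f A"
  proof
    assume inj: "inj_on f A"
    have "card A \<le> card {-N..N}" using card_inj_on_le[OF inj fA] by simp
    then have "(B+1)^(k+1) \<le> nat (2*N+1)" using cardA by simp
    then have "real ((B+1)^(k+1)) \<le> real (nat (2*N+1))" by linarith
    moreover have "real (nat (2*N+1)) \<le> 2*(k+1)*B*M + 1"
    proof -
      have "N \<ge> 0" unfolding N_def using M0 by simp
      moreover have "real_of_int N \<le> (k+1)*B*M" unfolding N_def by simp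
      ultimately show ?thesis by (simp add: algebra_simps)
    qed
    moreover have "real ((B+1)^(k+1)) > 2*(k+1)*B*M + 1"
    proof -
      have "real ((B+1)^(k+1)) = (real B + 1) * (real B + 1)^k" by (simp add: algebra_simps)
      also have "\<dots> \<ge> (real B + 1) * real B ^ k"
        by (intro mult_left_mono power_mono) auto
      finally have F: "real ((B+1)^(k+1)) \<ge> (real B + 1) * real B ^ k" .
      have "(real B + 1) * (2*(k+1)*M + 1) \<le> (real B + 1) * real B ^ k"
        using Bk by (intro mult_left_mono) auto
      then have "real ((B+1)^(k+1)) \<ge> (real B + 1) * (2*(k+1)*M + 1)" using F by linarith
      moreover have "(real B + 1) * (2*(k+1)*M + 1) > 2*(k+1)*B*M + 1"
      proof -
        have e: "(real B+1)*(2*(k+1)*M+1) = 2*(k+1)*B*M + (2*(k+1)*M + B + 1)" by (simp add: algebra_simps)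
        have "2*(k+1)*M \<ge> 0" using M0 by simp
        then show ?thesis unfolding e using B1 by simp
      qed
      ultimately show ?thesis by linarith
    qed
    ultimately show False by linarith
  qed
  then obtain c c' where c: "c \<in> A" "c' \<in> A" "c \<noteq> c'" "f c = f c'"
    unfolding inj_on_def by blast
  define d where "d i = int (c i) - int (c' i)" for i
  have "\<exists>i\<le>k. c i \<noteq> c' i"
  proof (rule ccontr)
    assume "\<not> ?thesis"
    then have "\<forall>i. c i = c' i" using c(1,2) unfolding A_def by (metis PiE_E atMost_iff)
    then show False using c(3) by auto
  qed
  then have "\<exists>i\<le>k. d i \<noteq> 0" unfolding d_def by auto
  moreover have "\<forall>i\<le>k. \<bar>d i\<bar> \<le> B"
  proof (intro allI impI)
    fix i assume "i \<le> k"
    then have "c i \<le> B" "c' i \<le> B" using c(1,2) unfolding A_def by (auto simp: PiE_iff)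
    then show "\<bar>d i\<bar> \<le> B" unfolding d_def by linarith
  qed
  moreover have "(\<Sum>i\<le>k. d i * z i) = 0"
    using c(4) unfolding d_def f_def by (simp add: left_diff_distrib sum_subtractf)
  ultimately show ?thesis by blast
qed


lemma extend_step:
  fixes \<xi> \<delta> M :: real and k B :: nat and x0 :: int and x :: "nat \<Rightarrow> int"
  assumes k1: "k \<ge> 1" and x0: "x0 \<noteq> 0"
    and err: "\<forall>m\<in>{1..k}. \<bar>real_of_int x0 * \<xi> ^ m - real_of_int (x m)\<bar> \<le> \<delta>"
    and zb: "\<forall>i\<le>k. \<bar>(if i = 0 then x0 else x i)\<bar> \<le> M"
    and Bk: "real B ^ k \<ge> 2*(k+1)*M + 1"
  shows "\<exists>(y0::int) (y::nat\<Rightarrow>int). 0 < \<bar>y0\<bar> \<and> \<bar>y0\<bar> \<le> int B * \<bar>x0\<bar> \<and>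
     (\<forall>m\<in>{1..k+1}. \<bar>real_of_int y0 * \<xi> ^ m - real_of_int (y m)\<bar>
         \<le> ((k+1) * max 1 \<bar>\<xi>\<bar> ^ (k+1) + k) * B * \<delta>)"
proof -
  define z where "z i = (if i = 0 then x0 else x i)" for i
  define R where "R = max 1 \<bar>\<xi>\<bar>"
  define K where "K = (k+1) * R ^ (k+1) + k"
  have zb': "\<forall>i\<le>k. real_of_int \<bar>z i\<bar> \<le> M" using zb unfolding z_def by simp
  from siegel[OF zb' Bk k1] obtain d :: "nat \<Rightarrow> int" where
    dall: "(\<exists>i\<le>k. d i \<noteq> 0) \<and> (\<forall>i\<le>k. \<bar>d i\<bar> \<le> B) \<and> (\<Sum>i\<le>k. d i * z i) = 0"
    by (elim exE)
  from dall have d1: "\<exists>i\<le>k. d i \<noteq> 0" by (elim conjE)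
  from dall have d2: "\<forall>i\<le>k. \<bar>d i\<bar> \<le> B" by (elim conjE)
  from dall have d3: "(\<Sum>i\<le>k. d i * z i) = 0" by (elim conjE)
  define D where "D = Max {i. i \<le> k \<and> d i \<noteq> 0}"
  have finD: "finite {i. i \<le> k \<and> d i \<noteq> 0}" by simp
  have neD: "{i. i \<le> k \<and> d i \<noteq> 0} \<noteq> {}" using d1 by auto
  have Dk: "D \<le> k" and dD: "d D \<noteq> 0"
    using Max_in[OF finD neD] unfolding D_def by auto
  have dz: "\<And>i. D < i \<Longrightarrow> i \<le> k \<Longrightarrow> d i = 0"
  proof (rule ccontr)
    fix i assume "D < i" "i \<le> k" "d i \<noteq> 0"
    then have "i \<le> D" unfolding D_def using Max_ge[OF finD] by auto
    then show False using \<open>D < i\<close> by simp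
  qed
  define e where "e i = real_of_int x0 * \<xi> ^ i - real_of_int (z i)" for i
  have e0: "e 0 = 0" unfolding e_def z_def by simp
  have eb: "\<And>i. i \<le> k \<Longrightarrow> \<bar>e i\<bar> \<le> \<delta>"
  proof -
    fix i assume i: "i \<le> k"
    have d0: "\<delta> \<ge> 0" using err k1 by (meson abs_ge_zero atLeastAtMost_iff order_trans le_refl)
    show "\<bar>e i\<bar> \<le> \<delta>"
    proof (cases "i = 0")
      case True then show ?thesis using e0 d0 by simp
    next
      case False then show ?thesis using err i unfolding e_def z_def by auto
    qed
  qed
  have d0: "\<delta> \<ge> 0" using eb[of 0] e0 by simp
  have R1: "R \<ge> 1" and Rx: "\<bar>\<xi>\<bar> \<le> R" unfolding R_def by auto
  define P where "P = (\<Sum>i\<le>D. real_of_int (d i) * \<xi> ^ i)"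
  have sumD: "(\<Sum>i\<le>D. d i * z i) = 0"
  proof -
    have "(\<Sum>i\<le>k. d i * z i) = (\<Sum>i\<le>D. d i * z i) + (\<Sum>i\<in>{D<..k}. d i * z i)"
    proof -
      have U: "{..k} = {..D} \<union> {D<..k}" using Dk by auto
      show ?thesis unfolding U by (rule sum.union_disjoint) auto
    qed
    moreover have "(\<Sum>i\<in>{D<..k}. d i * z i) = 0" using dz by (intro sum.neutral) auto
    ultimately show ?thesis using d3 by simp
  qed
  have xP: "real_of_int x0 * P = (\<Sum>i\<le>D. real_of_int (d i) * e i)"
  proof -
    have "real_of_int x0 * P = (\<Sum>i\<le>D. real_of_int (d i) * (real_of_int (z i) + e i))"
      unfolding P_def e_def by (simp add: sum_distrib_left algebra_simps)
    also have "\<dots> = real_of_int (\<Sum>i\<le>D. d i * z i) + (\<Sum>i\<le>D. real_of_int (d i) * e i)"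
      by (simp add: distrib_left sum.distrib)
    finally show ?thesis using sumD by simp
  qed
  have xPb: "\<bar>real_of_int x0 * P\<bar> \<le> (k+1) * B * \<delta>"
  proof -
    have "\<bar>real_of_int x0 * P\<bar> \<le> (\<Sum>i\<le>D. \<bar>real_of_int (d i) * e i\<bar>)"
      unfolding xP by (rule sum_abs)
    also have "\<dots> \<le> (\<Sum>i\<le>D. real B * \<delta>)"
    proof (rule sum_mono)
      fix i assume "i \<in> {..D}"
      then have i: "i \<le> k" using Dk by auto
      have "\<bar>real_of_int (d i)\<bar> \<le> real B" using d2 i by (metis of_int_abs of_int_of_nat_eq of_int_le_iff)
      then show "\<bar>real_of_int (d i) * e i\<bar> \<le> real B * \<delta>"
        unfolding abs_mult using eb[OF i] d0 by (intro mult_mono) auto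
    qed
    also have "\<dots> = (D+1) * B * \<delta>" by (simp add: algebra_simps)
    also have "\<dots> \<le> (k+1) * B * \<delta>" using Dk d0 by (intro mult_right_mono) (auto intro: mult_right_mono)
    finally show ?thesis .
  qed
  define y0 where "y0 = d D * x0"
  define y where "y m = (if m \<le> k then d D * x m else - (\<Sum>i<D. d i * z (k+1-D+i)))" for m
  have K1: "K \<ge> 1"
  proof -
    have "R ^ (k+1) \<ge> 0" using R1 by simp
    then have "(k+1) * R ^ (k+1) \<ge> 0" by simp
    then show ?thesis unfolding K_def using k1 by linarith
  qed
  have B0: "\<bar>d D\<bar> \<le> B" using d2 Dk by auto
  have "0 < \<bar>y0\<bar>" unfolding y0_def using dD x0 by simp
  moreover have "\<bar>y0\<bar> \<le> int B * \<bar>x0\<bar>" unfolding y0_def abs_mult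
    using B0 by (intro mult_right_mono) auto
  moreover have "\<forall>m\<in>{1..k+1}. \<bar>real_of_int y0 * \<xi> ^ m - real_of_int (y m)\<bar> \<le> K * B * \<delta>"
  proof
    fix m assume m: "m \<in> {1..k+1}"
    show "\<bar>real_of_int y0 * \<xi> ^ m - real_of_int (y m)\<bar> \<le> K * B * \<delta>"
    proof (cases "m \<le> k")
      case True
      then have "\<bar>real_of_int y0 * \<xi> ^ m - real_of_int (y m)\<bar>
          = \<bar>real_of_int (d D)\<bar> * \<bar>real_of_int x0 * \<xi> ^ m - real_of_int (x m)\<bar>"
        unfolding y0_def y_def by (simp add: abs_mult[symmetric] algebra_simps)
      also have "\<dots> \<le> real B * \<delta>"
        using m True err B0 d0 by (intro mult_mono) auto
      also have "\<dots> \<le> K * (B * \<delta>)" using K1 d0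
        using mult_right_mono[OF K1, of "real B * \<delta>"] by simp
      also have "\<dots> = K * B * \<delta>" by (simp add: mult.assoc)
      finally show ?thesis .
    next
      case False
      then have mk: "m = k+1" using m by auto
      have "real_of_int y0 * \<xi> ^ m - real_of_int (y m)
          = real_of_int (d D) * real_of_int x0 * \<xi> ^ (k+1)
            + (\<Sum>i<D. real_of_int (d i) * real_of_int (z (k+1-D+i)))"
        unfolding y0_def y_def mk by simp
      also have "\<dots> = real_of_int (d D) * real_of_int x0 * \<xi> ^ (k+1)
            + (\<Sum>i<D. real_of_int (d i) * (real_of_int x0 * \<xi> ^ (k+1-D+i) - e (k+1-D+i)))"
        unfolding e_def by simp
      also have "\<dots> = \<xi> ^ (k+1-D) * (real_of_int x0 * P)
            - (\<Sum>i<D. real_of_int (d i) * e (k+1-D+i))"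
      proof -
        have "\<xi> ^ (k+1-D) * (real_of_int x0 * P)
           = (\<Sum>i\<le>D. real_of_int (d i) * real_of_int x0 * \<xi> ^ (k+1-D+i))"
          unfolding P_def by (simp add: sum_distrib_left power_add algebra_simps)
        also have "\<dots> = (\<Sum>i<D. real_of_int (d i) * real_of_int x0 * \<xi> ^ (k+1-D+i))
             + real_of_int (d D) * real_of_int x0 * \<xi> ^ (k+1)"
          using Dk by (simp add: lessThan_Suc_atMost[symmetric])
        finally show ?thesis by (simp add: algebra_simps sum_subtractf sum_distrib_left)
      qed
      finally have eq: "real_of_int y0 * \<xi> ^ m - real_of_int (y m) = \<xi> ^ (k+1-D) * (real_of_int x0 * P)
            - (\<Sum>i<D. real_of_int (d i) * e (k+1-D+i))" .
      have t1: "\<bar>\<xi> ^ (k+1-D) * (real_of_int x0 * P)\<bar> \<le> R^(k+1) * ((k+1) * B * \<delta>)"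
      proof -
        have "\<bar>\<xi>\<bar> ^ (k+1-D) \<le> R ^ (k+1-D)" using Rx by (intro power_mono) auto
        also have "\<dots> \<le> R ^ (k+1)" using R1 by (intro power_increasing) auto
        finally have "\<bar>\<xi> ^ (k+1-D)\<bar> \<le> R ^ (k+1)" by (simp add: power_abs)
        then show ?thesis unfolding abs_mult[of "\<xi> ^ (k+1-D)"] using xPb
          by (intro mult_mono) auto
      qed
      have t2: "\<bar>\<Sum>i<D. real_of_int (d i) * e (k+1-D+i)\<bar> \<le> k * B * \<delta>"
      proof -
        have "\<bar>\<Sum>i<D. real_of_int (d i) * e (k+1-D+i)\<bar> \<le> (\<Sum>i<D. \<bar>real_of_int (d i) * e (k+1-D+i)\<bar>)"
          by (rule sum_abs)
        also have "\<dots> \<le> (\<Sum>i<D. real B * \<delta>)"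
        proof (rule sum_mono)
          fix i assume "i \<in> {..<D}"
          then have i: "i \<le> k" "k+1-D+i \<le> k" using Dk by auto
          have "\<bar>real_of_int (d i)\<bar> \<le> real B" using d2 i by (metis of_int_abs of_int_of_nat_eq of_int_le_iff)
          then show "\<bar>real_of_int (d i) * e (k+1-D+i)\<bar> \<le> real B * \<delta>"
            unfolding abs_mult using eb[OF i(2)] d0 by (intro mult_mono) auto
        qed
        also have "\<dots> = D * B * \<delta>" by (simp add: algebra_simps)
        also have "\<dots> \<le> k * B * \<delta>" using Dk d0 by (intro mult_right_mono) (auto intro: mult_right_mono)
        finally show ?thesis .
      qed
      have "\<bar>real_of_int y0 * \<xi> ^ m - real_of_int (y m)\<bar> \<le> R^(k+1) * ((k+1) * B * \<delta>) + k * B * \<delta>"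
        unfolding eq using t1 t2 by linarith
      also have "\<dots> = K * B * \<delta>" unfolding K_def by (simp add: algebra_simps)
      finally show ?thesis .
    qed
  qed
  ultimately show ?thesis unfolding K_def R_def by blast
qed


definition appS :: "nat \<Rightarrow> real \<Rightarrow> real set" where
  "appS n \<xi> = {lam :: real.
     \<forall>X0 :: real. \<exists>X \<ge> X0. X > 0 \<and>
       (\<exists>(x0 :: int) (x :: nat \<Rightarrow> int).
          0 < \<bar>x0\<bar> \<and> real_of_int \<bar>x0\<bar> \<le> X \<and>
          (\<forall>m \<in> {1..n}. \<bar>real_of_int x0 * \<xi> ^ m - real_of_int (x m)\<bar> \<le> X powr (- lam)))}"

lemma unif_lambda_appS: "unif_lambda n \<xi> = Sup (ereal ` appS n \<xi>)"
  unfolding unif_lambda_def appS_def by simp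

lemma appS_zero: "0 \<in> appS n \<xi>"
  unfolding appS_def
proof (safe)
  fix X0 :: real
  define X where "X = max X0 1"
  have "X \<ge> X0" "X > 0" unfolding X_def by auto
  moreover have "\<forall>m\<in>{1..n}. \<bar>real_of_int 1 * \<xi> ^ m - real_of_int (round (\<xi> ^ m))\<bar> \<le> X powr (- 0)"
  proof
    fix m
    have "\<bar>\<xi> ^ m - real_of_int (round (\<xi> ^ m))\<bar> \<le> 1/2"
      using of_int_round_abs_le[of "\<xi>^m"] by (simp add: abs_minus_commute)
    then show "\<bar>real_of_int 1 * \<xi> ^ m - real_of_int (round (\<xi> ^ m))\<bar> \<le> X powr (- 0)"
      using \<open>X > 0\<close> by simp
  qed
  moreover have "real_of_int \<bar>1::int\<bar> \<le> X" unfolding X_def by simp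
  ultimately show "\<exists>X\<ge>X0. 0 < X \<and> (\<exists>x0 x. 0 < \<bar>x0\<bar> \<and> real_of_int \<bar>x0\<bar> \<le> X \<and>
      (\<forall>m\<in>{1..n}. \<bar>real_of_int x0 * \<xi> ^ m - real_of_int (x m)\<bar> \<le> X powr - 0))"
    by (intro exI[of _ X] conjI exI[of _ "1::int"] exI[of _ "\<lambda>m. round (\<xi> ^ m)"]) auto
qed

lemma appS_mono:
  assumes "lam \<in> appS n \<xi>" "w \<le> lam"
  shows "w \<in> appS n \<xi>"
  unfolding appS_def
proof (safe)
  fix X0 :: real
  obtain X x0 x where X: "X \<ge> max X0 1" "X > 0" "0 < \<bar>x0\<bar>" "real_of_int \<bar>x0\<bar> \<le> X"
    "\<forall>m \<in> {1..n}. \<bar>real_of_int x0 * \<xi> ^ m - real_of_int (x m)\<bar> \<le> X powr (- lam)"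
    using assms(1) unfolding appS_def by blast
  have "X powr (- lam) \<le> X powr (- w)" using X(1) assms(2) by (intro powr_mono) auto
  then show "\<exists>X\<ge>X0. 0 < X \<and> (\<exists>x0 x. 0 < \<bar>x0\<bar> \<and> real_of_int \<bar>x0\<bar> \<le> X \<and>
      (\<forall>m\<in>{1..n}. \<bar>real_of_int x0 * \<xi> ^ m - real_of_int (x m)\<bar> \<le> X powr - w))"
    using X by (intro exI[of _ X] conjI exI[of _ x0] exI[of _ x]) force+
qed


lemma one_step:
  fixes \<xi> lam \<mu> :: real and k :: nat
  assumes k1: "k \<ge> 1" and lamS: "lam \<in> appS k \<xi>" and lam1: "lam \<ge> -1"
    and mu1: "\<mu> \<ge> -1" and mulam: "\<mu> < (k * lam - 1) / (k+1)"
  shows "\<mu> \<in> appS (k+1) \<xi>"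
proof -
  define R where "R = max 1 \<bar>\<xi>\<bar>"
  define K where "K = (k+1) * R ^ (k+1) + k"
  define c0 where "c0 = 2*(k+1)*(R^k+1)+1"
  define C where "C = c0 powr (1/k) + 1"
  define ex where "ex = (1+\<mu>)/k + \<mu> - lam"
  have R1: "R \<ge> 1" unfolding R_def by simp
  have K0: "K > 0" unfolding K_def using R1 k1 by (simp add: add_pos_nonneg)
  have c01: "c0 \<ge> 1" unfolding c0_def using R1 by simp
  have C0: "C > 0" unfolding C_def by (simp add: add_nonneg_pos)
  have ex0: "ex < 0"
  proof -
    have "\<mu> * (k+1) < k * lam - 1" using mulam by (simp add: field_simps)
    then have "(1+\<mu>) + k*\<mu> - k*lam < 0" by (simp add: algebra_simps)
    then have "((1+\<mu>) + k*\<mu> - k*lam)/k < 0" using k1 by (simp add: divide_neg_pos)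
    then show ?thesis unfolding ex_def using k1 by (simp add: field_simps)
  qed
  define G where "G = K * C powr (1+\<mu>)"
  have G0: "G > 0" unfolding G_def using K0 C0 by simp
  have "((\<lambda>X::real. X powr ex) \<longlongrightarrow> 0) at_top"
    using ex0 by (intro tendsto_neg_powr filterlim_ident) auto
  then have "eventually (\<lambda>X::real. X powr ex < 1/G) at_top"
    using G0 by (intro order_tendstoD(2)) auto
  then obtain X1 where X1: "\<And>X. X \<ge> X1 \<Longrightarrow> X powr ex < 1/G"
    unfolding eventually_at_top_linorder by blast
  show ?thesis unfolding appS_def
  proof (safe)
    fix Y0 :: real
    obtain X x0 x where X: "X \<ge> max (max X1 Y0) 1" "X > 0" "0 < \<bar>x0\<bar>" "real_of_int \<bar>x0\<bar> \<le> X"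
      and err: "\<forall>m \<in> {1..k}. \<bar>real_of_int x0 * \<xi> ^ m - real_of_int (x m)\<bar> \<le> X powr (- lam)"
      using lamS unfolding appS_def by blast
    have Xge1: "X \<ge> 1" using X(1) by simp
    define \<delta> where "\<delta> = X powr (- lam)"
    define M where "M = X * (R^k+1)"
    have dX: "\<delta> \<le> X" 
    proof -
      have "X powr (- lam) \<le> X powr 1" using Xge1 lam1 by (intro powr_mono) auto
      then show ?thesis using Xge1 by (simp add: \<delta>_def)
    qed
    have zb: "\<forall>i\<le>k. \<bar>(if i = 0 then x0 else x i)\<bar> \<le> M"
    proof (intro allI impI)
      fix i assume i: "i \<le> k"
      have "X * R^k \<ge> 0" using Xge1 R1 by simp
      then have RX: "X \<le> M" unfolding M_def by (simp add: algebra_simps)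
      show "\<bar>(if i = 0 then x0 else x i)\<bar> \<le> M"
      proof (cases "i = 0")
        case True then show ?thesis using X(4) RX by simp
      next
        case False
        then have "\<bar>real_of_int x0 * \<xi> ^ i - real_of_int (x i)\<bar> \<le> \<delta>" using err i \<delta>_def by auto
        moreover have "\<bar>real_of_int x0 * \<xi> ^ i\<bar> \<le> X * R^k"
        proof -
          have "\<bar>\<xi>\<bar>^i \<le> R^i" unfolding R_def by (intro power_mono) auto
          also have "\<dots> \<le> R^k" using R1 i by (intro power_increasing) auto
          finally have "\<bar>\<xi>\<bar>^i \<le> R^k" .
          then show ?thesis unfolding abs_mult power_abs using X(4)
            by (intro mult_mono) auto
        qed
        ultimately have "\<bar>real_of_int (x i)\<bar> \<le> X * R^k + X" using dX by linarith
        then show ?thesis using False unfolding M_def by (simp add: algebra_simps)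
      qed
    qed
    define v where "v = 2*(k+1)*M + 1"
    have M0: "M \<ge> 0" unfolding M_def using Xge1 R1 by simp
    have v1: "v \<ge> 1" unfolding v_def using M0 by simp
    define B where "B = nat \<lceil>v powr (1/k)\<rceil>"
    have Bge: "real B \<ge> v powr (1/k)" unfolding B_def by linarith
    have Bk: "real B ^ k \<ge> v"
    proof -
      have "v = (v powr (1/k)) ^ k" using v1 k1 by (simp add: powr_realpow[symmetric] powr_powr)
      also have "\<dots> \<le> real B ^ k" using Bge by (intro power_mono) auto
      finally show ?thesis .
    qed
    have B1: "real B \<ge> 1" using Bge ge_one_powr_ge_zero[OF v1, of "1/k"] by simp
    have Ble: "real B \<le> C * X powr (1/k)"
    proof -
      have "real B = real_of_int \<lceil>v powr (1/k)\<rceil>" unfolding B_def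
        by (simp add: of_nat_nat)
      then have "real B \<le> v powr (1/k) + 1"
        using of_int_ceiling_le_add_one[of "v powr (1/k)"] by simp
      moreover have "v \<le> c0 * X"
      proof -
        have "c0 * X = 2*(k+1)*M + X" unfolding c0_def M_def by (simp add: algebra_simps)
        then show ?thesis unfolding v_def using Xge1 by simp
      qed
      then have "v powr (1/k) \<le> (c0 * X) powr (1/k)" using v1 by (intro powr_mono2) auto
      then have "v powr (1/k) \<le> c0 powr (1/k) * X powr (1/k)" using c01 Xge1 by (simp add: powr_mult)
      moreover have "1 \<le> X powr (1/k)" using Xge1 by (simp add: ge_one_powr_ge_zero)
      ultimately show ?thesis unfolding C_def by (simp add: algebra_simps)
    qed
    have x00: "x0 \<noteq> 0" using X(3) by simp
    have err': "\<forall>m\<in>{1..k}. \<bar>real_of_int x0 * \<xi> ^ m - real_of_int (x m)\<bar> \<le> \<delta>"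
      using err unfolding \<delta>_def .
    have Bk': "real B ^ k \<ge> 2*(k+1)*M + 1" using Bk unfolding v_def .
    obtain y0 y where y: "0 < \<bar>y0\<bar>" "\<bar>y0\<bar> \<le> int B * \<bar>x0\<bar>"
      "\<forall>m\<in>{1..k+1}. \<bar>real_of_int y0 * \<xi> ^ m - real_of_int (y m)\<bar> \<le> K * B * \<delta>"
      using extend_step[OF k1 x00 err' zb Bk'] unfolding K_def R_def by blast
    define Y where "Y = real B * X"
    have YX: "Y \<ge> X" unfolding Y_def using B1 X(2) by simp
    have Ybd: "K * B * \<delta> \<le> Y powr (- \<mu>)"
    proof -
      have Bp: "real B powr (1+\<mu>) \<le> C powr (1+\<mu>) * X powr ((1+\<mu>)/k)"
      proof -
        have "real B powr (1+\<mu>) \<le> (C * X powr (1/k)) powr (1+\<mu>)"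
          using Ble B1 mu1 by (intro powr_mono2) auto
        also have "\<dots> = C powr (1+\<mu>) * X powr ((1+\<mu>)/k)"
          using C0 X(2) by (simp add: powr_mult powr_powr)
        finally show ?thesis .
      qed
      have "K * B * \<delta> = (K * real B powr (1+\<mu>) * X powr (\<mu> - lam)) * Y powr (- \<mu>)"
      proof -
        have e1: "real B powr (1+\<mu>) = real B * real B powr \<mu>" using B1 by (simp add: powr_add)
        have e2: "X powr (\<mu> - lam) = X powr \<mu> * X powr (-lam)"
          by (metis diff_conv_add_uminus powr_add)
        have e3: "(real B * X) powr (-\<mu>) = real B powr (-\<mu>) * X powr (-\<mu>)"
          using B1 X(2) by (simp add: powr_mult)
        have e4: "real B powr \<mu> * real B powr (-\<mu>) = 1" using B1 by (simp add: powr_add[symmetric])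
        have e5: "X powr \<mu> * X powr (-\<mu>) = 1" using X(2) by (simp add: powr_add[symmetric])
        have "(K * real B powr (1+\<mu>) * X powr (\<mu> - lam)) * (real B * X) powr (- \<mu>)
           = K * real B * X powr (-lam) * (real B powr \<mu> * real B powr (-\<mu>)) * (X powr \<mu> * X powr (-\<mu>))"
          unfolding e1 e2 e3 by (simp add: ac_simps)
        then show ?thesis unfolding e4 e5 Y_def \<delta>_def by (metis mult_1_right)
      qed
      also have "\<dots> \<le> (K * (C powr (1+\<mu>) * X powr ((1+\<mu>)/k)) * X powr (\<mu> - lam)) * Y powr (- \<mu>)"
        using Bp K0 by (intro mult_right_mono mult_left_mono) auto
      also have "\<dots> = (G * X powr ex) * Y powr (- \<mu>)"
        unfolding G_def ex_def by (simp add: powr_add[symmetric] algebra_simps)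
      also have "\<dots> \<le> 1 * Y powr (- \<mu>)"
      proof -
        have "X powr ex < 1/G" using X1 X(1) by simp
        then have "G * X powr ex \<le> 1" using G0 by (simp add: field_simps)
        then show ?thesis by (intro mult_right_mono) auto
      qed
      finally show ?thesis by simp
    qed
    show "\<exists>X\<ge>Y0. 0 < X \<and> (\<exists>x0 x. 0 < \<bar>x0\<bar> \<and> real_of_int \<bar>x0\<bar> \<le> X \<and>
      (\<forall>m\<in>{1..k+1}. \<bar>real_of_int x0 * \<xi> ^ m - real_of_int (x m)\<bar> \<le> X powr - \<mu>))"
    proof (intro exI[of _ Y] conjI exI[of _ y0] exI[of _ y])
      show "Y \<ge> Y0" using YX X(1) by simp
      show "0 < Y" using YX X(2) by simp
      show "0 < \<bar>y0\<bar>" by (rule y(1))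
      have "real_of_int \<bar>y0\<bar> \<le> real B * real_of_int \<bar>x0\<bar>" using y(2)
        by (metis of_int_le_iff of_int_mult of_int_of_nat_eq)
      also have "\<dots> \<le> Y" unfolding Y_def using X(4) by (intro mult_left_mono) auto
      finally show "real_of_int \<bar>y0\<bar> \<le> Y" .
      show "\<forall>m\<in>{1..k+1}. \<bar>real_of_int y0 * \<xi> ^ m - real_of_int (y m)\<bar> \<le> Y powr - \<mu>"
      proof
        fix m assume m: "m \<in> {1..k+1}"
        have "\<bar>real_of_int y0 * \<xi> ^ m - real_of_int (y m)\<bar> \<le> K * B * \<delta>" using y(3) m by blast
        then show "\<bar>real_of_int y0 * \<xi> ^ m - real_of_int (y m)\<bar> \<le> Y powr - \<mu>" using Ybd by linarith
      qed
    qed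
  qed
qed


lemma iterate:
  fixes \<xi> lam :: real and k n :: nat
  assumes k1: "k \<ge> 1" and lamS: "lam \<in> appS k \<xi>" and lam0: "lam \<ge> 0" and nk: "n \<ge> k"
  shows "\<forall>w. -1 \<le> w \<and> w < (k*lam - n + k)/n \<longrightarrow> w \<in> appS n \<xi>"
  using nk
proof (induction n rule: dec_induct)
  case base
  show ?case
  proof (intro allI impI)
    fix w :: real assume "-1 \<le> w \<and> w < (k*lam - k + k)/k"
    then have "w \<le> lam" using k1 by simp
    then show "w \<in> appS k \<xi>" using appS_mono[OF lamS] by blast
  qed
next
  case (step n)
  have n1: "n \<ge> 1" using step.hyps k1 by simp
  show ?case
  proof (intro allI impI)
    fix w :: real assume w: "-1 \<le> w \<and> w < (k*lam - real (Suc n) + k)/real (Suc n)"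
    define T where "T = (k*lam - n + k)/n"
    define a where "a = ((n+1)*w+1)/n"
    have npos: "real n > 0" using n1 by simp
    have "w * (n+1) < k*lam - (n+1) + k" using w by (simp add: field_simps)
    then have "(n+1)*w + 1 < k*lam - n + k" by (simp add: algebra_simps)
    then have aT: "a < T" unfolding a_def T_def using npos by (simp add: divide_strict_right_mono)
    have "k*lam + k > 0" using k1 lam0 by (simp add: add_nonneg_pos)
    then have "-n < k*lam - n + k" by simp
    then have "-1 < T" unfolding T_def using npos by (simp add: field_simps)
    define \<mu> where "\<mu> = (max (-1) a + T)/2"
    have mu1: "\<mu> \<ge> -1" "\<mu> < T" "\<mu> > a" unfolding \<mu>_def using aT \<open>-1 < T\<close> by auto
    have muS: "\<mu> \<in> appS n \<xi>" using step.IH mu1 unfolding T_def by auto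
    have "w < (n * \<mu> - 1) / (n+1)"
    proof -
      have "(n+1)*w+1 < n * \<mu>" using mu1(3) npos unfolding a_def by (simp add: field_simps)
      then show ?thesis by (simp add: field_simps)
    qed
    then have "w \<in> appS (n+1) \<xi>" using one_step[OF n1 muS mu1(1)] w by simp
    then show "w \<in> appS (Suc n) \<xi>" by simp
  qed
qed

lemma L_nonneg: "unif_lambda n \<xi> \<ge> 0"
  unfolding unif_lambda_appS using appS_zero by (metis SUP_upper zero_ereal_def)

lemma main_ineq:
  fixes \<xi> :: real and k n :: nat
  assumes k1: "k \<ge> 1" and nk: "n \<ge> k"
  shows "(ereal (real k) * unif_lambda k \<xi> - ereal (real n) + ereal (real k)) / ereal (real n)
           \<le> unif_lambda n \<xi>"
proof (rule dense_le)
  fix y assume y: "y < (ereal (real k) * unif_lambda k \<xi> - ereal (real n) + ereal (real k)) / ereal (real n)"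
  have npos: "real n > 0" and kpos: "real k > 0" using k1 nk by auto
  have Lsup: "\<And>r. ereal r < unif_lambda k \<xi> \<Longrightarrow> \<exists>lam\<in>appS k \<xi>. r < lam"
    unfolding unif_lambda_appS by (auto simp: less_Sup_iff)
  show "y \<le> unif_lambda n \<xi>"
  proof (cases y)
    case MInf then show ?thesis by simp
  next
    case PInf then show ?thesis using y by simp
  next
    case (real w)
    define r where "r = (n*w + n - k)/k"
    have rL: "ereal r < unif_lambda k \<xi>"
    proof (cases "unif_lambda k \<xi>")
      case (real l)
      then have "w < (k*l - n + k)/n" using y \<open>y = ereal w\<close> npos by simp
      then have "n*w < k*l - n + k" using npos by (simp add: field_simps)
      then have "r < l" unfolding r_def using kpos by (simp add: field_simps)
      then show ?thesis using real by simp
    next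
      case PInf then show ?thesis by simp
    next
      case MInf then show ?thesis using L_nonneg[of k \<xi>] by simp
    qed
    obtain lam where lamS: "lam \<in> appS k \<xi>" and rl: "r < lam" using Lsup[OF rL] by blast
    define lam' where "lam' = max lam 0"
    have lam'S: "lam' \<in> appS k \<xi>" unfolding lam'_def using lamS appS_zero
      by (cases "lam \<ge> 0") auto
    have "w < (k*lam' - n + k)/n"
    proof -
      have "r < lam'" using rl unfolding lam'_def by simp
      then have "n*w + n - k < k * lam'" unfolding r_def using kpos by (simp add: field_simps)
      then show ?thesis using npos by (simp add: field_simps)
    qed
    show ?thesis
    proof (cases "w \<ge> -1")
      case True
      then have "w \<in> appS n \<xi>" using iterate[OF k1 lam'S _ nk] \<open>w < _\<close> unfolding lam'_def by auto
      then show ?thesis unfolding real unif_lambda_appS by (simp add: Sup_upper)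
    next
      case False
      then have "y \<le> 0" using real by simp
      then show ?thesis using L_nonneg[of n \<xi>] by simp
    qed
  qed
qed


theorem theorem2p4:
  fixes \<xi> :: real and k :: nat
  assumes "transcendental_real \<xi>" and "k \<ge> 1"
  shows "ereal (real (k + 1)) * (1 + unif_lambda (k + 1) \<xi>)
           \<ge> ereal (real k) * (1 + unif_lambda k \<xi>) \<and>
         (\<forall>n::nat. n \<ge> k \<longrightarrow>
           unif_lambda n \<xi> \<ge>
             (ereal (real k) * unif_lambda k \<xi> - ereal (real n) + ereal (real k)) / ereal (real n))"
proof
  show "\<forall>n::nat. n \<ge> k \<longrightarrow>
           unif_lambda n \<xi> \<ge>
             (ereal (real k) * unif_lambda k \<xi> - ereal (real n) + ereal (real k)) / ereal (real n)"
    using main_ineq[OF assms(2)] by blast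
  have h: "(ereal (real k) * unif_lambda k \<xi> - ereal (real (k+1)) + ereal (real k)) / ereal (real (k+1))
      \<le> unif_lambda (k+1) \<xi>" using main_ineq[OF assms(2), of "k+1"] by simp
  have kpos: "real k > 0" using assms(2) by simp
  show "ereal (real (k + 1)) * (1 + unif_lambda (k + 1) \<xi>)
           \<ge> ereal (real k) * (1 + unif_lambda k \<xi>)"
  proof (cases "unif_lambda k \<xi>")
    case PInf
    then have "unif_lambda (k+1) \<xi> = \<infinity>" using h kpos by simp
    then show ?thesis by simp
  next
    case MInf then show ?thesis using L_nonneg[of k \<xi>] by simp
  next
    case (real l)
    show ?thesis
    proof (cases "unif_lambda (k+1) \<xi>")
      case PInf then show ?thesis by simp
    next
      case MInf then show ?thesis using L_nonneg[of "k+1" \<xi>] by simp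
    next
      case (real m)
      have "(k*l - (k+1) + k)/(k+1) \<le> m" using h \<open>unif_lambda k \<xi> = ereal l\<close> real by simp
      then have "k*l - 1 \<le> m*(k+1)" by (simp add: field_simps)
      then have "k*(1+l) \<le> (k+1)*(1+m)" by (simp add: algebra_simps)
      then show ?thesis using \<open>unif_lambda k \<xi> = ereal l\<close> real by (simp add: add.commute)
    qed
  qed
qed

end
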